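(* Let $H$ and $E$ be Hilbert spaces, let $T:H\to H$ be a bounded linear operator with $\ker T=\{0\}$, let $\gamma:E\to H$ be a bounded linear operator with $\ker\gamma=\{0\}$ and $\mathcal{R}(T)\cap\mathcal{R}(\gamma)=\{0\}$, and let $\Lambda$ be a linear operator in $E$ with domain $\mathcal{D}(\Lambda)\subset E$. Define on $\mathcal{D}(A)=\mathcal{R}(T)\dot+\mathcal{R}(\gamma)$ the maps $A(Tf+\gamma\varphi)=f$ and $\Gamma_0(Tf+\gamma\varphi)=\varphi$ ($f\in H,\varphi\in E$), and on $\mathcal{D}(\Gamma_1)=\mathcal{R}(T)\dot+\gamma\mathcal{D}(\Lambda)$ the map $\Gamma_1(Tf+\gamma\varphi)=\gamma^*f+\Lambda\varphi$ ($f\in H,\varphi\in\mathcal{D}(\Lambda)$). For $\lambda\in\mathbb{C}$ with $I-\lambda T$ boundedly invertible, let $M(\lambda)$ be the operator in $E$ defined by $M(\lambda)\Gamma_0u_\lambda=\Gamma_1u_\lambda$ for all $u_\lambda\in\ker(A-\lambda I)\cap\mathcal{D}(\Gamma_1)$. Then for every such $\lambda$, \[M(\lambda)=\Gamma_1(I-\lambda T)^{-1}\gamma=\Lambda+\lambda\gamma^*(I-\lambda T)^{-1}\gamma,\qquad \mathcal{D}(M(\lambda))=\mathcal{D}(\Lambda).\]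
   Context: $\mathcal{R}(\cdot)$ denotes range, $\dot+$ direct sum, $\gamma^*:H\to E$ the Hilbert-space adjoint of $\gamma$. $M(\lambda)$ is called the M-operator. *)

theory Defs
  imports "HOL-Analysis.Analysis"
begin

class complex_vector = real_vector +
  fixes scaleC :: "complex \<Rightarrow> 'a \<Rightarrow> 'a" (infixr \<open>*\<^sub>C\<close> 75)
  assumes scaleC_add_right: "a *\<^sub>C (x + y) = a *\<^sub>C x + a *\<^sub>C y"
    and scaleC_add_left: "(a + b) *\<^sub>C x = a *\<^sub>C x + b *\<^sub>C x"
    and scaleC_scaleC: "a *\<^sub>C (b *\<^sub>C x) = (a * b) *\<^sub>C x"
    and scaleC_one: "1 *\<^sub>C x = x"
    and scaleR_scaleC: "r *\<^sub>R x = complex_of_real r *\<^sub>C x"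

class complex_inner = complex_vector + real_normed_vector +
  fixes cinner :: "'a \<Rightarrow> 'a \<Rightarrow> complex"
  assumes cinner_commute: "cinner x y = cnj (cinner y x)"
    and cinner_add_right: "cinner x (y + z) = cinner x y + cinner x z"
    and cinner_scaleC_right: "cinner x (a *\<^sub>C y) = a * cinner x y"
    and cinner_self_norm: "cinner x x = complex_of_real ((norm x)\<^sup>2)"

class chilbert_space = complex_inner + complete_space

definition csubspace :: "'a::complex_vector set \<Rightarrow> bool" where
  "csubspace S \<longleftrightarrow> 0 \<in> S \<and> (\<forall>x\<in>S. \<forall>y\<in>S. x + y \<in> S) \<and> (\<forall>c. \<forall>x\<in>S. c *\<^sub>C x \<in> S)"

text \<open>A linear operator \<open>L\<close> with domain \<open>D\<close> (values outside \<open>D\<close> are irrelevant).\<close>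
definition clinear_on :: "'a::complex_vector set \<Rightarrow> ('a \<Rightarrow> 'b::complex_vector) \<Rightarrow> bool" where
  "clinear_on D L \<longleftrightarrow> csubspace D \<and>
     (\<forall>x\<in>D. \<forall>y\<in>D. L (x + y) = L x + L y) \<and> (\<forall>c. \<forall>x\<in>D. L (c *\<^sub>C x) = c *\<^sub>C L x)"

definition bounded_clinear :: "('a::complex_inner \<Rightarrow> 'b::complex_inner) \<Rightarrow> bool" where
  "bounded_clinear L \<longleftrightarrow> clinear_on UNIV L \<and> (\<exists>K. \<forall>x. norm (L x) \<le> norm x * K)"

definition is_cadjoint :: "('a::complex_inner \<Rightarrow> 'b::complex_inner) \<Rightarrow> ('b \<Rightarrow> 'a) \<Rightarrow> bool" where
  "is_cadjoint L L' \<longleftrightarrow> (\<forall>x y. cinner y (L x) = cinner (L' y) x)"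

definition I_minus :: "complex \<Rightarrow> ('a::complex_vector \<Rightarrow> 'a) \<Rightarrow> 'a \<Rightarrow> 'a" where
  "I_minus z T = (\<lambda>x. x - z *\<^sub>C T x)"

definition boundedly_invertible :: "('a::complex_inner \<Rightarrow> 'a) \<Rightarrow> bool" where
  "boundedly_invertible S \<longleftrightarrow> bij S \<and> bounded_clinear (inv S)"

definition dom_A :: "('h \<Rightarrow> 'h::complex_vector) \<Rightarrow> ('e \<Rightarrow> 'h) \<Rightarrow> 'h set" where
  "dom_A T \<gamma> = {T f + \<gamma> \<phi> | f \<phi>. True}"

definition A_op :: "('h \<Rightarrow> 'h::complex_vector) \<Rightarrow> ('e \<Rightarrow> 'h) \<Rightarrow> 'h \<Rightarrow> 'h" where
  "A_op T \<gamma> u = (THE f. \<exists>\<phi>. u = T f + \<gamma> \<phi>)"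

definition Gamma0 :: "('h \<Rightarrow> 'h::complex_vector) \<Rightarrow> ('e \<Rightarrow> 'h) \<Rightarrow> 'h \<Rightarrow> 'e" where
  "Gamma0 T \<gamma> u = (THE \<phi>. \<exists>f. u = T f + \<gamma> \<phi>)"

definition dom_Gamma1 :: "('h \<Rightarrow> 'h::complex_vector) \<Rightarrow> ('e \<Rightarrow> 'h) \<Rightarrow> 'e set \<Rightarrow> 'h set" where
  "dom_Gamma1 T \<gamma> D\<Lambda> = {T f + \<gamma> \<phi> | f \<phi>. \<phi> \<in> D\<Lambda>}"

definition Gamma1 :: "('h \<Rightarrow> 'h::complex_vector) \<Rightarrow> ('e \<Rightarrow> 'h) \<Rightarrow> ('h \<Rightarrow> 'e) \<Rightarrow> ('e \<Rightarrow> 'e::complex_vector)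
    \<Rightarrow> 'h \<Rightarrow> 'e" where
  "Gamma1 T \<gamma> \<gamma>' \<Lambda> u = \<gamma>' (A_op T \<gamma> u) + \<Lambda> (Gamma0 T \<gamma> u)"

definition M_graph :: "('h \<Rightarrow> 'h::complex_vector) \<Rightarrow> ('e \<Rightarrow> 'h) \<Rightarrow> ('h \<Rightarrow> 'e) \<Rightarrow> 'e set
    \<Rightarrow> ('e \<Rightarrow> 'e::complex_vector) \<Rightarrow> complex \<Rightarrow> ('e \<times> 'e) set" where
  "M_graph T \<gamma> \<gamma>' D\<Lambda> \<Lambda> z =
     {(Gamma0 T \<gamma> u, Gamma1 T \<gamma> \<gamma>' \<Lambda> u) | u.
        u \<in> dom_A T \<gamma> \<and> u \<in> dom_Gamma1 T \<gamma> D\<Lambda> \<and> A_op T \<gamma> u = z *\<^sub>C u}"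

end

theory Submission
  imports Defs
begin

lemma lin_uminus:
  assumes "clinear_on UNIV L" shows "L (- x) = - L x"
proof -
  have "- x = complex_of_real (-1) *\<^sub>C x" by (metis scaleR_minus1_left scaleR_scaleC)
  moreover have "- L x = complex_of_real (-1) *\<^sub>C L x" by (metis scaleR_minus1_left scaleR_scaleC)
  ultimately show ?thesis using assms unfolding clinear_on_def by auto
qed

lemma lin_diff:
  assumes "clinear_on UNIV L" shows "L (x - y) = L x - L y"
proof -
  have "L (x + - y) = L x + L (- y)" using assms unfolding clinear_on_def by blast
  thus ?thesis using lin_uminus[OF assms] by (simp only: diff_conv_add_uminus)
qed

lemma cinner_scaleC_left: "cinner (a *\<^sub>C x) y = cnj a * cinner x y"
  by (metis cinner_commute cinner_scaleC_right complex_cnj_cnj complex_cnj_mult)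

lemma cinner_add_left: "cinner (x + y) z = cinner x z + cinner y z"
  by (metis cinner_commute cinner_add_right complex_cnj_add)

lemma cinner_ext:
  fixes a b :: "'a::complex_inner"
  assumes "\<forall>x. cinner a x = cinner b x" shows "a = b"
proof -
  have m: "- b = complex_of_real (-1) *\<^sub>C b" by (metis scaleR_minus1_left scaleR_scaleC)
  have "cinner (a - b) (a - b) = cinner a (a - b) - cinner b (a - b)"
    unfolding diff_conv_add_uminus m cinner_add_left cinner_scaleC_left by simp
  also have "\<dots> = 0" using assms by simp
  finally have "complex_of_real ((norm (a - b))\<^sup>2) = 0" using cinner_self_norm by metis
  thus ?thesis by simp
qed

lemma adj_scale:
  assumes "is_cadjoint g g'" shows "g' (c *\<^sub>C y) = c *\<^sub>C g' y"
proof (rule cinner_ext, intro allI)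
  fix x
  have "cinner (g' (c *\<^sub>C y)) x = cinner (c *\<^sub>C y) (g x)" using assms unfolding is_cadjoint_def by metis
  also have "\<dots> = cnj c * cinner y (g x)" by (rule cinner_scaleC_left)
  also have "\<dots> = cnj c * cinner (g' y) x" using assms unfolding is_cadjoint_def by metis
  also have "\<dots> = cinner (c *\<^sub>C g' y) x" by (rule cinner_scaleC_left[symmetric])
  finally show "cinner (g' (c *\<^sub>C y)) x = cinner (c *\<^sub>C g' y) x" .
qed

theorem theorem2:
  fixes T :: "'h::chilbert_space \<Rightarrow> 'h"
    and \<gamma> :: "'e::chilbert_space \<Rightarrow> 'h"
    and \<gamma>' :: "'h \<Rightarrow> 'e"
    and D\<Lambda> :: "'e set"
    and \<Lambda> :: "'e \<Rightarrow> 'e"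
    and z :: complex
  assumes T_bdd: "bounded_clinear T"
    and T_inj: "\<forall>f. T f = 0 \<longrightarrow> f = 0"
    and \<gamma>_bdd: "bounded_clinear \<gamma>"
    and \<gamma>_inj: "\<forall>\<phi>. \<gamma> \<phi> = 0 \<longrightarrow> \<phi> = 0"
    and ranges: "range T \<inter> range \<gamma> = {0}"
    and adj: "is_cadjoint \<gamma> \<gamma>'"
    and \<Lambda>_lin: "clinear_on D\<Lambda> \<Lambda>"
    and invz: "boundedly_invertible (I_minus z T)"
  shows "(\<forall>\<phi>. inv (I_minus z T) (\<gamma> \<phi>) \<in> dom_Gamma1 T \<gamma> D\<Lambda> \<longleftrightarrow> \<phi> \<in> D\<Lambda>)
    \<and> M_graph T \<gamma> \<gamma>' D\<Lambda> \<Lambda> z =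
        {(\<phi>, Gamma1 T \<gamma> \<gamma>' \<Lambda> (inv (I_minus z T) (\<gamma> \<phi>))) | \<phi>. \<phi> \<in> D\<Lambda>}
    \<and> (\<forall>\<phi>\<in>D\<Lambda>. Gamma1 T \<gamma> \<gamma>' \<Lambda> (inv (I_minus z T) (\<gamma> \<phi>))
                 = \<Lambda> \<phi> + z *\<^sub>C \<gamma>' (inv (I_minus z T) (\<gamma> \<phi>)))"
proof -
  have TL: "clinear_on UNIV T" and gL: "clinear_on UNIV \<gamma>"
    using T_bdd \<gamma>_bdd unfolding bounded_clinear_def by auto
  have Tsc: "T (c *\<^sub>C x) = c *\<^sub>C T x" for c x using TL unfolding clinear_on_def by auto
  have uniq: "f = f' \<and> p = p'" if "T f + \<gamma> p = T f' + \<gamma> p'" for f f' p p'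
  proof -
    have "T f - T f' = \<gamma> p' - \<gamma> p" using that by (simp add: algebra_simps)
    hence e: "T (f - f') = \<gamma> (p' - p)" by (simp add: lin_diff[OF TL] lin_diff[OF gL])
    hence "T (f - f') \<in> range T \<inter> range \<gamma>" by (metis IntI rangeI)
    hence "T (f - f') = 0" using ranges by auto
    thus ?thesis using e T_inj \<gamma>_inj by auto
  qed
  have Aop: "A_op T \<gamma> (T f + \<gamma> p) = f" for f p
    unfolding A_op_def by (rule the_equality) (auto dest: uniq)
  have G0: "Gamma0 T \<gamma> (T f + \<gamma> p) = p" for f p
    unfolding Gamma0_def by (rule the_equality) (auto dest: uniq)
  define S where "S = I_minus z T"
  define R where "R = inv S"
  have bij: "bij S" using invz unfolding S_def boundedly_invertible_def by auto
  have SR: "S (R y) = y" for y unfolding R_def using bij by (simp add: bij_is_surj surj_f_inv_f)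
  have RS: "R (S u) = u" for u unfolding R_def using bij by (simp add: bij_is_inj)
  have decomp: "R (\<gamma> p) = T (z *\<^sub>C R (\<gamma> p)) + \<gamma> p" for p
  proof -
    have "R (\<gamma> p) - z *\<^sub>C T (R (\<gamma> p)) = \<gamma> p" using SR[of "\<gamma> p"] unfolding S_def I_minus_def .
    thus ?thesis by (simp add: Tsc algebra_simps)
  qed
  have dom1: "R (\<gamma> p) \<in> dom_Gamma1 T \<gamma> D\<Lambda> \<longleftrightarrow> p \<in> D\<Lambda>" for p
  proof
    assume "R (\<gamma> p) \<in> dom_Gamma1 T \<gamma> D\<Lambda>"
    then obtain f q where "R (\<gamma> p) = T f + \<gamma> q" "q \<in> D\<Lambda>" unfolding dom_Gamma1_def by auto
    thus "p \<in> D\<Lambda>" using decomp[of p] uniq by metis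
  next
    assume "p \<in> D\<Lambda>" thus "R (\<gamma> p) \<in> dom_Gamma1 T \<gamma> D\<Lambda>"
      unfolding dom_Gamma1_def using decomp[of p] by blast
  qed
  have G1: "Gamma1 T \<gamma> \<gamma>' \<Lambda> (R (\<gamma> p)) = \<Lambda> p + z *\<^sub>C \<gamma>' (R (\<gamma> p))" for p
    unfolding Gamma1_def using decomp[of p] Aop G0 adj_scale[OF adj]
    by (metis add.commute)
  have MG: "M_graph T \<gamma> \<gamma>' D\<Lambda> \<Lambda> z = {(p, Gamma1 T \<gamma> \<gamma>' \<Lambda> (R (\<gamma> p))) | p. p \<in> D\<Lambda>}"
  proof (rule set_eqI, rule iffI)
    fix x assume "x \<in> M_graph T \<gamma> \<gamma>' D\<Lambda> \<Lambda> z"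
    then obtain u where x: "x = (Gamma0 T \<gamma> u, Gamma1 T \<gamma> \<gamma>' \<Lambda> u)"
      and u1: "u \<in> dom_Gamma1 T \<gamma> D\<Lambda>" and uA: "A_op T \<gamma> u = z *\<^sub>C u"
      unfolding M_graph_def by auto
    obtain f p where u: "u = T f + \<gamma> p" and p: "p \<in> D\<Lambda>" using u1 unfolding dom_Gamma1_def by auto
    have "f = z *\<^sub>C u" using uA Aop u by metis
    hence "u = z *\<^sub>C T u + \<gamma> p" using u Tsc by metis
    hence "S u = \<gamma> p" unfolding S_def I_minus_def by (simp add: algebra_simps)
    hence "u = R (\<gamma> p)" using RS by metis
    moreover have "Gamma0 T \<gamma> u = p" using u G0 by simp
    ultimately show "x \<in> {(p, Gamma1 T \<gamma> \<gamma>' \<Lambda> (R (\<gamma> p))) | p. p \<in> D\<Lambda>}" using x p by auto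
  next
    fix x assume "x \<in> {(p, Gamma1 T \<gamma> \<gamma>' \<Lambda> (R (\<gamma> p))) | p. p \<in> D\<Lambda>}"
    then obtain p where x: "x = (p, Gamma1 T \<gamma> \<gamma>' \<Lambda> (R (\<gamma> p)))" and p: "p \<in> D\<Lambda>" by auto
    let ?u = "R (\<gamma> p)"
    have "?u \<in> dom_A T \<gamma>" unfolding dom_A_def using decomp[of p] by blast
    moreover have "?u \<in> dom_Gamma1 T \<gamma> D\<Lambda>" using dom1 p by simp
    moreover have "A_op T \<gamma> ?u = z *\<^sub>C ?u" using decomp[of p] Aop by metis
    moreover have "Gamma0 T \<gamma> ?u = p" using decomp[of p] G0 by metis
    ultimately show "x \<in> M_graph T \<gamma> \<gamma>' D\<Lambda> \<Lambda> z" unfolding M_graph_def x by force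
  qed
  show ?thesis using dom1 MG G1 unfolding R_def S_def by auto
qed

end
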